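(* Let $n\ge 1$, $\theta^*\in\mathbb{R}^n$, and let $\phi:\mathbb{R}_{\ge0}\to\mathbb{R}^n$ be piecewise continuous and persistently exciting: there exist $M>0$, $T>0$, $\delta>0$ with $|\phi(t)|\le M$ for all $t\ge0$ and $\int_t^{t+T}\phi(s)\phi^T(s)\,ds\ge \delta I_n$ for all $t\ge 0$. Let $\beta,\gamma,\mu>0$ with $\beta\ge 2\gamma/\mu$, and set $\mathcal{N}_t:=1+\mu\,\phi^T(t)\phi(t)$. Consider the system in $x=(\theta,\vartheta)\in\mathbb{R}^n\times\mathbb{R}^n$ $$\dot\theta=-\beta(\theta-\vartheta)\mathcal{N}_t,\qquad \dot\vartheta=-\gamma\,\phi(t)\phi^T(t)(\theta-\theta^* ).$$ Then the point $(\theta^*,\theta^* )$ is uniformly globally asymptotically stable for this system. *)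

theory Defs
  imports "HOL-Analysis.Analysis"
begin

definition outer :: "real^'n \<Rightarrow> real^'n \<Rightarrow> real^'n^'n" where
  "outer v w = (\<chi> i j. v $ i * w $ j)"

definition mat_ge :: "real^'n^'n \<Rightarrow> real^'n^'n \<Rightarrow> bool" where
  "mat_ge A B \<longleftrightarrow> (\<forall>v. v \<bullet> ((A - B) *v v) \<ge> 0)"

definition piecewise_continuous_nonneg :: "(real \<Rightarrow> 'a::topological_space) \<Rightarrow> bool" where
  "piecewise_continuous_nonneg f \<longleftrightarrow>
     (\<forall>b\<ge>0. \<exists>S. finite S \<and> continuous_on ({0..b} - S) f \<and>
        (\<forall>s\<in>S. (s > 0 \<longrightarrow> (\<exists>l. (f \<longlongrightarrow> l) (at_left s))) \<and> (\<exists>l. (f \<longlongrightarrow> l) (at_right s))))"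

definition persistently_exciting :: "(real \<Rightarrow> real^'n) \<Rightarrow> bool" where
  "persistently_exciting \<phi> \<longleftrightarrow>
     (\<exists>M T \<delta>. M > 0 \<and> T > 0 \<and> \<delta> > 0 \<and> (\<forall>t\<ge>0. norm (\<phi> t) \<le> M) \<and>
        (\<forall>t\<ge>0. mat_ge (integral {t..t+T} (\<lambda>s. outer (\<phi> s) (\<phi> s))) (\<delta> *\<^sub>R mat 1)))"

text \<open>(Caratheodory) solution of x' = f(t,x) on [t0,\<infinity>): integral equation.\<close>
definition is_solution :: "(real \<Rightarrow> 'a::euclidean_space \<Rightarrow> 'a) \<Rightarrow> real \<Rightarrow> (real \<Rightarrow> 'a) \<Rightarrow> bool" where
  "is_solution f t0 x \<longleftrightarrow> (\<forall>t\<ge>t0. ((\<lambda>s. f s (x s)) has_integral (x t - x t0)) {t0..t})"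

definition class_K :: "(real \<Rightarrow> real) \<Rightarrow> bool" where
  "class_K \<alpha> \<longleftrightarrow> continuous_on {0..} \<alpha> \<and> \<alpha> 0 = 0 \<and> strict_mono_on {0..} \<alpha>"

definition class_KL :: "(real \<Rightarrow> real \<Rightarrow> real) \<Rightarrow> bool" where
  "class_KL \<beta> \<longleftrightarrow> continuous_on ({0..} \<times> {0..}) (\<lambda>(r,s). \<beta> r s) \<and>
     (\<forall>s\<ge>0. class_K (\<lambda>r. \<beta> r s)) \<and>
     (\<forall>r\<ge>0. antimono_on {0..} (\<beta> r) \<and> ((\<beta> r) \<longlongrightarrow> 0) at_top)"

definition UGAS :: "(real \<Rightarrow> 'a::euclidean_space \<Rightarrow> 'a) \<Rightarrow> 'a \<Rightarrow> bool" where
  "UGAS f xs \<longleftrightarrow> (\<exists>\<beta>. class_KL \<beta> \<and>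
     (\<forall>t0\<ge>0. \<forall>x. is_solution f t0 x \<longrightarrow>
        (\<forall>t\<ge>t0. norm (x t - xs) \<le> \<beta> (norm (x t0 - xs)) (t - t0))))"

end

theory Submission
  imports Defs
begin

lemma pc_integrable:
  fixes h :: "real \<Rightarrow> real"
  assumes "finite S" "continuous_on ({a..b} - S) h" "\<And>s. s \<in> {a..b} \<Longrightarrow> \<bar>h s\<bar> \<le> B"
  shows "h integrable_on {a..b}"
proof -
  have "({a..b} - S) \<in> sets lebesgue" using assms(1) by (simp add: sets.Diff finite_imp_closed borel_closed)
  then have "h measurable_on ({a..b} - S)"
    using assms(2) continuous_imp_measurable_on_sets_lebesgue measurable_on_iff_borel_measurable by blast
  then have m: "h measurable_on {a..b}"
    by (rule measurable_on_spike_set) (auto intro: negligible_finite[OF assms(1)] negligible_subset)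
  show ?thesis
    apply (rule measurable_bounded_by_integrable_imp_integrable_real[where g="\<lambda>_. B"])
    using m assms(3) by (auto simp: measurable_on_iff_borel_measurable)
qed

lemma pc_integrable2:
  fixes H :: "'a::euclidean_space \<Rightarrow> 'b::euclidean_space \<Rightarrow> real" and \<phi> :: "real \<Rightarrow> 'a" and x :: "real \<Rightarrow> 'b"
  assumes "finite S" "continuous_on ({a..b} - S) \<phi>" "\<And>s. s \<in> {a..b} \<Longrightarrow> norm (\<phi> s) \<le> M"
    "continuous_on {a..b} x" "continuous_on UNIV (\<lambda>y. H (fst y) (snd y))"
  shows "(\<lambda>s. H (\<phi> s) (x s)) integrable_on {a..b}"
proof -
  let ?K = "cball (0::'a) M \<times> x ` {a..b}"
  have "compact ?K" using assms(4) by (intro compact_Times compact_continuous_image) (auto simp: compact_cball)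
  then have "compact ((\<lambda>y. H (fst y) (snd y)) ` ?K)"
    using assms(5) continuous_on_subset by (intro compact_continuous_image) blast+
  then obtain B where B: "\<And>y. y \<in> ?K \<Longrightarrow> norm (H (fst y) (snd y)) \<le> B"
    using compact_imp_bounded bounded_iff by (metis (no_types, lifting) image_eqI)
  show ?thesis
  proof (rule pc_integrable[OF assms(1), where B=B])
    have "continuous_on ({a..b} - S) (\<lambda>s. (\<phi> s, x s))"
      using assms(2) continuous_on_subset[OF assms(4), of "{a..b} - S"] by (intro continuous_intros) auto
    then show "continuous_on ({a..b} - S) (\<lambda>s. H (\<phi> s) (x s))"
      using continuous_on_compose2[OF assms(5) _ subset_UNIV, of _ "\<lambda>s. (\<phi> s, x s)"] by auto
    fix s assume "s \<in> {a..b}" then show "\<bar>H (\<phi> s) (x s)\<bar> \<le> B"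
      using B[of "(\<phi> s, x s)"] assms(3) by auto
  qed
qed

lemma outer_mult: "outer a a *v v = (a \<bullet> v) *\<^sub>R (a::real^'n)"
  by (simp add: vec_eq_iff matrix_vector_mult_def outer_def inner_vec_def sum_distrib_left mult_ac)

lemma CS_integral:
  fixes f :: "real \<Rightarrow> real"
  assumes "f integrable_on {a..b}" "(\<lambda>s. (f s)^2) integrable_on {a..b}" "a \<le> b"
  shows "(integral {a..b} f)^2 \<le> (b - a) * integral {a..b} (\<lambda>s. (f s)^2)"
proof (cases "a = b")
  case True then show ?thesis by simp
next
  case False
  then have ab: "b - a > 0" using assms(3) by simp
  define I where "I = integral {a..b} f"
  define J where "J = integral {a..b} (\<lambda>s. (f s)^2)"
  define c where "c = I / (b - a)"
  have i1: "(\<lambda>s. 2 * c * f s) integrable_on {a..b}"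
    using integrable_cmul[OF assms(1)] by (simp add: mult.assoc)
  have i2: "(\<lambda>s. (f s)^2 - 2 * c * f s) integrable_on {a..b}"
    using assms(2) i1 by (rule integrable_diff)
  have i3: "(\<lambda>s. (f s)^2 - 2 * c * f s + c^2) integrable_on {a..b}"
    using i2 integrable_const_ivl by (rule integrable_add)
  have eq: "integral {a..b} (\<lambda>s. (f s)^2 - 2 * c * f s + c^2) = J - 2 * c * I + c^2 * (b - a)"
    using integral_add[OF i2 integrable_const_ivl[of "c^2" a b]] integral_diff[OF assms(2) i1]
      assms(3)
    by (simp add: I_def J_def)
  have "0 \<le> integral {a..b} (\<lambda>s. (f s)^2 - 2 * c * f s + c^2)"
  proof (rule integral_nonneg[OF i3])
    fix x have "0 \<le> (f x - c)^2" by simp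
    also have "(f x - c)^2 = (f x)^2 - 2 * c * f x + c^2" by (simp add: power2_diff algebra_simps)
    finally show "0 \<le> (f x)^2 - 2 * c * f x + c^2" .
  qed
  then have "0 \<le> (b - a) * (J - 2 * c * I + c^2 * (b - a))" using eq ab by simp
  also have "(b - a) * (J - 2 * c * I + c^2 * (b - a)) = (b - a) * J - I^2"
  proof -
    have cd: "c * (b - a) = I" using ab by (simp add: c_def)
    have "(b - a) * (J - 2 * c * I + c^2 * (b - a)) = (b - a) * J - 2 * (c * (b - a)) * I + (c * (b - a))^2"
      by (simp add: algebra_simps power2_eq_square)
    then show ?thesis by (simp add: cd power2_eq_square)
  qed
  finally show ?thesis by (simp add: I_def J_def)
qed


lemma incr_bound:
  fixes h :: "real \<Rightarrow> 'a::euclidean_space" and y :: "real \<Rightarrow> 'a" and q :: "real \<Rightarrow> real"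
  assumes hi: "\<And>s. s \<in> {t..t+T} \<Longrightarrow> (h has_integral (y s - y t)) {t..s}"
   and n1: "(\<lambda>r. norm (h r)) integrable_on {t..t+T}"
   and n2: "(\<lambda>r. (norm (h r))^2) integrable_on {t..t+T}"
   and qi: "q integrable_on {t..t+T}"
   and hq: "\<And>r. r \<in> {t..t+T} \<Longrightarrow> (norm (h r))^2 \<le> C * q r"
   and q0: "\<And>r. r \<in> {t..t+T} \<Longrightarrow> 0 \<le> q r"
   and T0: "T \<ge> 0" and C0: "C \<ge> 0" and s: "s \<in> {t..t+T}"
  shows "(norm (y s - y t))^2 \<le> T * C * integral {t..t+T} q"
proof -
  have sub: "{t..s} \<subseteq> {t..t+T}" using s by auto
  have hs: "(h has_integral (y s - y t)) {t..s}" using hi s by blast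
  have n1s: "(\<lambda>r. norm (h r)) integrable_on {t..s}" by (rule integrable_on_subinterval[OF n1 sub])
  have n2s: "(\<lambda>r. (norm (h r))^2) integrable_on {t..s}" by (rule integrable_on_subinterval[OF n2 sub])
  have qs: "q integrable_on {t..s}" by (rule integrable_on_subinterval[OF qi sub])
  have "norm (y s - y t) \<le> integral {t..s} (\<lambda>r. norm (h r))"
    using integral_norm_bound_integral[OF has_integral_integrable[OF hs] n1s] integral_unique[OF hs]
    by simp
  moreover have "0 \<le> norm (y s - y t)" by simp
  ultimately have "(norm (y s - y t))^2 \<le> (integral {t..s} (\<lambda>r. norm (h r)))^2"
    by (rule power_mono)
  also have "\<dots> \<le> (s - t) * integral {t..s} (\<lambda>r. (norm (h r))^2)"
    using CS_integral[OF n1s n2s] s by simp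
  also have "\<dots> \<le> T * (C * integral {t..t+T} q)"
  proof (rule mult_mono)
    show "s - t \<le> T" using s by simp
    show "0 \<le> T" by fact
    show "0 \<le> integral {t..s} (\<lambda>r. (norm (h r))^2)" by (rule integral_nonneg[OF n2s]) simp
    have "integral {t..s} (\<lambda>r. (norm (h r))^2) \<le> integral {t..s} (\<lambda>r. C * q r)"
      by (rule integral_le[OF n2s]) (use hq sub integrable_on_mult_right[OF qs] in auto)
    also have "\<dots> = C * integral {t..s} q" by simp
    also have "\<dots> \<le> C * integral {t..t+T} q"
      using integral_subset_le[OF sub qs qi] q0 C0 by (simp add: mult_left_mono)
    finally show "integral {t..s} (\<lambda>r. (norm (h r))^2) \<le> C * integral {t..t+T} q" .
  qed
  finally show ?thesis by (simp add: mult.assoc)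
qed

locale sys =
  fixes \<phi> :: "real \<Rightarrow> real^'n" and \<theta>s :: "real^'n" and \<beta> \<gamma> \<mu> M T \<delta> :: real
  assumes pc: "piecewise_continuous_nonneg \<phi>"
    and Mbound: "\<And>t. t \<ge> 0 \<Longrightarrow> norm (\<phi> t) \<le> M"
    and Mpos: "M > 0" and Tpos: "T > 0" and \<delta>pos: "\<delta> > 0"
    and pe: "\<And>t. t \<ge> 0 \<Longrightarrow> mat_ge (integral {t..t+T} (\<lambda>s. outer (\<phi> s) (\<phi> s))) (\<delta> *\<^sub>R mat 1)"
    and \<beta>pos: "\<beta> > 0" and \<gamma>pos: "\<gamma> > 0" and \<mu>pos: "\<mu> > 0" and \<beta>ge: "\<beta> \<ge> 2*\<gamma>/\<mu>"
begin

definition G :: "real^'n \<Rightarrow> (real^'n) \<times> (real^'n) \<Rightarrow> (real^'n) \<times> (real^'n)" where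
  "G u p = (-(\<beta>*(1+\<mu>*(u\<bullet>u))) *\<^sub>R (fst p - snd p), -(\<gamma>*(u\<bullet>(fst p - \<theta>s))) *\<^sub>R u)"

definition F :: "real \<Rightarrow> (real^'n) \<times> (real^'n) \<Rightarrow> (real^'n) \<times> (real^'n)" where
  "F t p = G (\<phi> t) p"

lemma pc_at:
  assumes "b \<ge> 0"
  obtains S where "finite S" "continuous_on ({0..b} - S) \<phi>" "\<And>s. s \<in> {0<..<b} - S \<Longrightarrow> isCont \<phi> s"
proof -
  obtain S where S: "finite S" "continuous_on ({0..b} - S) \<phi>"
    using pc assms unfolding piecewise_continuous_nonneg_def by blast
  have "isCont \<phi> s" if "s \<in> {0<..<b} - S" for s
  proof -
    have "open ({0<..<b} - S)" using S(1) by (intro open_Diff finite_imp_closed) auto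
    moreover have "continuous_on ({0<..<b} - S) \<phi>" by (rule continuous_on_subset[OF S(2)]) auto
    ultimately show ?thesis using that continuous_on_eq_continuous_at by blast
  qed
  then show ?thesis using S that by blast
qed

lemma sol_shift:
  assumes "is_solution F t0 x" "t0 \<le> a"
  shows "is_solution F a x"
  unfolding is_solution_def
proof (intro allI impI)
  fix t assume t: "a \<le> t"
  let ?g = "\<lambda>s. F s (x s)"
  have h1: "(?g has_integral (x t - x t0)) {t0..t}" using assms t unfolding is_solution_def by auto
  have h2: "(?g has_integral (x a - x t0)) {t0..a}" using assms unfolding is_solution_def by auto
  have i1: "?g integrable_on {t0..t}" using h1 by blast
  have ia: "?g integrable_on {a..t}" by (rule integrable_on_subinterval[OF i1]) (use assms in auto)
  have "integral {t0..a} ?g + integral {a..t} ?g = integral {t0..t} ?g"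
    by (rule Henstock_Kurzweil_Integration.integral_combine) (use assms t i1 in auto)
  then have "integral {a..t} ?g = x t - x a"
    using integral_unique[OF h1] integral_unique[OF h2] by (simp add: algebra_simps)
  then show "(?g has_integral (x t - x a)) {a..t}"
    using integrable_integral[OF ia] by simp
qed

lemma sol_cont:
  assumes "is_solution F a x" "a \<le> b"
  shows "continuous_on {a..b} x"
proof -
  let ?g = "\<lambda>s. F s (x s)"
  have "(?g has_integral (x b - x a)) {a..b}" using assms unfolding is_solution_def by simp
  then have ib: "?g integrable_on {a..b}" by (rule has_integral_integrable)
  have eq: "x s = x a + integral {a..s} ?g" if "s \<in> {a..b}" for s
  proof -
    have "(?g has_integral (x s - x a)) {a..s}" using assms that unfolding is_solution_def by auto
    then show ?thesis by (simp add: integral_unique)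
  qed
  have c1: "continuous_on {a..b} (\<lambda>s. x a + integral {a..s} ?g)"
    by (rule continuous_on_add[OF continuous_on_const indefinite_integral_continuous_1[OF ib]])
  show ?thesis by (rule continuous_on_eq[OF c1]) (metis eq)
qed

lemma sol_deriv:
  assumes sol: "is_solution F a x" and s: "a < s" and c: "isCont \<phi> s"
  shows "(x has_vector_derivative F s (x s)) (at s)"
proof -
  define b where "b = s + 1"
  let ?g = "\<lambda>s. F s (x s)"
  have "(?g has_integral (x b - x a)) {a..b}" using sol s unfolding is_solution_def b_def by auto
  then have ib: "?g integrable_on {a..b}" by blast
  have eq: "x r = x a + integral {a..r} ?g" if "r \<in> {a..b}" for r
  proof -
    have "(?g has_integral (x r - x a)) {a..r}" using sol that unfolding is_solution_def by auto
    then show ?thesis by (simp add: integral_unique)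
  qed
  have "continuous_on {a..b} x" using sol_cont[OF sol] s b_def by simp
  then have cx: "isCont x s"
    using s b_def continuous_on_interior[of "{a..b}" x s] by auto
  have "isCont ?g s" unfolding F_def G_def using c cx by (intro continuous_intros)
  then have "continuous (at s within ({a..b} - {})) ?g" by (simp add: continuous_at_imp_continuous_at_within)
  from integral_has_vector_derivative_continuous_at[OF ib _ _ this] s b_def
  have "((\<lambda>u. integral {a..u} ?g) has_vector_derivative ?g s) (at s)"
    by (simp add: at_within_Icc_at)
  then have D: "((\<lambda>u. x a + integral {a..u} ?g) has_vector_derivative ?g s) (at s)"
    using has_vector_derivative_add[OF has_vector_derivative_const[of "x a"]] by fastforce
  show ?thesis
  proof (rule has_vector_derivative_transform_within_open[OF D, where S="{a<..<b}"])
    show "s \<in> {a<..<b}" using s b_def by simp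
    fix y assume "y \<in> {a<..<b}" then show "x a + integral {a..y} ?g = x y" using eq[of y] by (simp only: atLeastAtMost_iff greaterThanLessThan_iff) (metis less_imp_le)
  qed simp
qed


definition Vf :: "(real^'n) \<times> (real^'n) \<Rightarrow> real" where
  "Vf p = ((snd p - \<theta>s) \<bullet> (snd p - \<theta>s) + (fst p - snd p) \<bullet> (fst p - snd p)) / \<gamma>"

definition qf :: "real^'n \<Rightarrow> (real^'n) \<times> (real^'n) \<Rightarrow> real" where
  "qf u p = (u \<bullet> (snd p - \<theta>s))^2 + (fst p - snd p) \<bullet> (fst p - snd p)"

definition Vd :: "(real^'n) \<times> (real^'n) \<Rightarrow> (real^'n) \<times> (real^'n) \<Rightarrow> real" where
  "Vd p d = (2 * ((snd p - \<theta>s) \<bullet> snd d) + 2 * ((fst p - snd p) \<bullet> (fst d - snd d))) / \<gamma>"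

definition \<kappa> :: real where "\<kappa> = min 1 (\<beta>/\<gamma>)"

lemma \<kappa>pos: "\<kappa> > 0" using \<beta>pos \<gamma>pos by (simp add: \<kappa>_def)

lemma qf_nonneg: "qf u p \<ge> 0" by (simp add: qf_def)

lemma Vd_G: "Vd p (G u p) = -2*(u \<bullet> (snd p - \<theta>s))^2 + 2*(u \<bullet> (fst p - snd p))^2
   - 2*(\<beta>/\<gamma>)*(1+\<mu>*(u\<bullet>u))*((fst p - snd p) \<bullet> (fst p - snd p))"
proof -
  define z where "z = snd p - \<theta>s"
  define w where "w = fst p - snd p"
  define A where "A = u \<bullet> z"
  define B where "B = u \<bullet> w"
  define N where "N = 1+\<mu>*(u\<bullet>u)"
  have e: "fst p - \<theta>s = w + z" by (simp add: z_def w_def)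
  have ue: "u \<bullet> (fst p - \<theta>s) = A + B" by (simp add: e A_def B_def inner_add_right)
  have s1: "z \<bullet> snd (G u p) = -(\<gamma>*(A+B)) * A"
    by (simp add: G_def ue A_def inner_commute[of z u] flip: z_def)
  have s2: "w \<bullet> (fst (G u p) - snd (G u p)) = -(\<beta>*N)*(w\<bullet>w) + \<gamma>*(A+B)*B"
  proof -
    have "fst (G u p) - snd (G u p) = (-(\<beta>*N)) *\<^sub>R w + (\<gamma>*(A+B)) *\<^sub>R u"
      by (simp add: G_def ue flip: w_def N_def)
    then show ?thesis by (simp add: inner_add_right inner_diff_right B_def inner_commute[of w u])
  qed
  have "Vd p (G u p) = (2*(-(\<gamma>*(A+B)) * A) + 2*(-(\<beta>*N)*(w\<bullet>w) + \<gamma>*(A+B)*B)) / \<gamma>"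
    unfolding Vd_def by (simp only: s1 s2 flip: z_def w_def)
  also have "\<dots> = -2*A^2 + 2*B^2 - 2*(\<beta>/\<gamma>)*N*(w\<bullet>w)"
    using \<gamma>pos by (simp add: field_simps power2_eq_square)
  finally show ?thesis by (simp add: A_def B_def N_def z_def w_def power2_eq_square)
qed

lemma Vd_le: "Vd p (G u p) \<le> -2*\<kappa>*qf u p"
proof -
  define A where "A = u \<bullet> (snd p - \<theta>s)"
  define B where "B = u \<bullet> (fst p - snd p)"
  define W where "W = (fst p - snd p) \<bullet> (fst p - snd p)"
  define U where "U = u \<bullet> u"
  have U0: "U \<ge> 0" and W0: "W \<ge> 0" by (simp_all add: U_def W_def)
  have "\<bar>B\<bar> \<le> norm u * norm (fst p - snd p)" unfolding B_def by (rule Cauchy_Schwarz_ineq2)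
  then have "\<bar>B\<bar>^2 \<le> (norm u * norm (fst p - snd p))^2" by (rule power_mono) simp
  then have B2: "B^2 \<le> U * W" by (simp add: U_def W_def power_mult_distrib power2_norm_eq_inner)
  have "\<beta> * \<mu> \<ge> 2 * \<gamma>" using \<beta>ge \<mu>pos by (simp add: pos_divide_le_eq)
  then have bm: "\<beta> * \<mu> / \<gamma> \<ge> 2" using \<gamma>pos by (simp add: pos_le_divide_eq)
  have "(\<beta>/\<gamma>)*(1+\<mu>*U)*W = (\<beta>/\<gamma>)*W + (\<beta>*\<mu>/\<gamma>)*(U*W)" by (simp add: algebra_simps add_divide_distrib)
  moreover have "(\<beta>*\<mu>/\<gamma>)*(U*W) \<ge> 2*(U*W)" using bm U0 W0 by (intro mult_right_mono) auto
  moreover have "Vd p (G u p) = -2*A^2 + 2*B^2 - 2*((\<beta>/\<gamma>)*(1+\<mu>*U)*W)"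
    by (simp add: Vd_G A_def B_def W_def U_def)
  ultimately have "Vd p (G u p) \<le> -2*A^2 - 2*((\<beta>/\<gamma>)*W)"
    using B2 mult_nonneg_nonneg[OF U0 W0] by linarith
  also have "\<dots> \<le> -2*\<kappa>*(A^2 + W)"
  proof -
    have "\<kappa> * A^2 \<le> 1 * A^2" by (intro mult_right_mono) (auto simp: \<kappa>_def)
    moreover have "\<kappa> * W \<le> (\<beta>/\<gamma>) * W" using W0 by (intro mult_right_mono) (auto simp: \<kappa>_def)
    moreover have "-2*\<kappa>*(A^2 + W) = -2*(\<kappa>*A^2) - 2*(\<kappa>*W)" by (simp add: algebra_simps)
    ultimately show ?thesis by linarith
  qed
  finally show ?thesis by (simp add: qf_def A_def W_def)
qed

lemma V_deriv:
  assumes "(x has_vector_derivative d) (at s)"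
  shows "((\<lambda>r. Vf (x r)) has_vector_derivative Vd (x s) d) (at s)"
proof -
  have D: "(x has_derivative (\<lambda>h. h *\<^sub>R d)) (at s)" using assms by (simp add: has_vector_derivative_def)
  define Z where "Z r = snd (x r) - \<theta>s" for r
  define W where "W r = fst (x r) - snd (x r)" for r
  have fx: "((\<lambda>r. fst (x r)) has_derivative (\<lambda>h. h *\<^sub>R fst d)) (at s)"
    using has_derivative_fst[OF D] by simp
  have sx: "((\<lambda>r. snd (x r)) has_derivative (\<lambda>h. h *\<^sub>R snd d)) (at s)"
    using has_derivative_snd[OF D] by simp
  have dZ: "(Z has_derivative (\<lambda>h. h *\<^sub>R snd d)) (at s)"
    unfolding Z_def using has_derivative_diff[OF sx has_derivative_const[of \<theta>s]] by simp
  have dW: "(W has_derivative (\<lambda>h. h *\<^sub>R (fst d - snd d))) (at s)"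
    unfolding W_def using has_derivative_diff[OF fx sx] by (simp add: scaleR_diff_right)
  have H: "((\<lambda>r. Z r \<bullet> Z r + W r \<bullet> W r) has_derivative
     (\<lambda>h. (Z s \<bullet> (h *\<^sub>R snd d) + (h *\<^sub>R snd d) \<bullet> Z s)
        + (W s \<bullet> (h *\<^sub>R (fst d - snd d)) + (h *\<^sub>R (fst d - snd d)) \<bullet> W s))) (at s)"
    by (intro has_derivative_add has_derivative_inner dZ dW)
  note H2 = bounded_linear.has_derivative[OF bounded_linear_mult_right[of "1/\<gamma>"] H]
  have e1: "(\<lambda>r. Vf (x r)) = (\<lambda>r. (1/\<gamma>) * (Z r \<bullet> Z r + W r \<bullet> W r))"
    by (simp add: Vf_def Z_def W_def fun_eq_iff)
  have e2: "(\<lambda>h. (1/\<gamma>) * ((Z s \<bullet> (h *\<^sub>R snd d) + (h *\<^sub>R snd d) \<bullet> Z s)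
        + (W s \<bullet> (h *\<^sub>R (fst d - snd d)) + (h *\<^sub>R (fst d - snd d)) \<bullet> W s))) = (\<lambda>h. h *\<^sub>R Vd (x s) d)"
  proof
    fix h :: real
    have "(Z s \<bullet> (h *\<^sub>R snd d) + (h *\<^sub>R snd d) \<bullet> Z s)
        + (W s \<bullet> (h *\<^sub>R (fst d - snd d)) + (h *\<^sub>R (fst d - snd d)) \<bullet> W s)
        = h * (2 * (Z s \<bullet> snd d) + 2 * (W s \<bullet> (fst d - snd d)))"
      by (simp only: inner_scaleR_left inner_scaleR_right inner_commute[of "snd d" "Z s"]
          inner_commute[of "fst d - snd d" "W s"]) (simp add: algebra_simps)
    moreover have "Vd (x s) d = (2 * (Z s \<bullet> snd d) + 2 * (W s \<bullet> (fst d - snd d))) / \<gamma>"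
      by (simp add: Vd_def Z_def W_def)
    ultimately show "(1/\<gamma>) * ((Z s \<bullet> (h *\<^sub>R snd d) + (h *\<^sub>R snd d) \<bullet> Z s)
        + (W s \<bullet> (h *\<^sub>R (fst d - snd d)) + (h *\<^sub>R (fst d - snd d)) \<bullet> W s)) = h *\<^sub>R Vd (x s) d"
      by simp
  qed
  have "((\<lambda>r. Vf (x r)) has_derivative (\<lambda>h. h *\<^sub>R Vd (x s) d)) (at s)"
    using H2 unfolding e1 e2 .
  then show ?thesis by (simp add: has_vector_derivative_def)
qed


lemma Vf_nonneg: "Vf p \<ge> 0" using \<gamma>pos by (simp add: Vf_def)

lemma V_decr:
  assumes sol: "is_solution F t0 x" and t0: "0 \<le> t0" "t0 \<le> a" "a \<le> b"
  shows "(\<lambda>s. qf (\<phi> s) (x s)) integrable_on {a..b}"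
    and "Vf (x b) + 2*\<kappa>*integral {a..b} (\<lambda>s. qf (\<phi> s) (x s)) \<le> Vf (x a)"
proof -
  obtain S where S: "finite S" "continuous_on ({0..b} - S) \<phi>" "\<And>s. s \<in> {0<..<b} - S \<Longrightarrow> isCont \<phi> s"
    using pc_at[of b] t0 by auto
  have cx: "continuous_on {a..b} x" using sol_cont[OF sol_shift[OF sol t0(2)] t0(3)] .
  have cphi: "continuous_on ({a..b} - S) \<phi>" by (rule continuous_on_subset[OF S(2)]) (use t0 in auto)
  have bphi: "\<And>s. s \<in> {a..b} \<Longrightarrow> norm (\<phi> s) \<le> M" using Mbound t0 by auto
  have cq: "continuous_on UNIV (\<lambda>y. qf (fst y) (snd y))" unfolding qf_def by (intro continuous_intros)
  show qi: "(\<lambda>s. qf (\<phi> s) (x s)) integrable_on {a..b}"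
    by (rule pc_integrable2[OF S(1) cphi bphi cx cq])
  have der: "((\<lambda>r. Vf (x r)) has_vector_derivative Vd (x s) (G (\<phi> s) (x s))) (at s)"
    if "s \<in> {a<..<b} - S" for s
  proof -
    have "isCont \<phi> s" using S(3)[of s] that t0 by auto
    then have "(x has_vector_derivative F s (x s)) (at s)" using sol_deriv[OF sol, of s] that t0 by auto
    then show ?thesis unfolding F_def by (rule V_deriv)
  qed
  have cV: "continuous_on {a..b} (\<lambda>r. Vf (x r))"
    unfolding Vf_def using \<gamma>pos by (intro continuous_intros cx) auto
  have FTC: "((\<lambda>s. Vd (x s) (G (\<phi> s) (x s))) has_integral (Vf (x b) - Vf (x a))) {a..b}"
    by (rule fundamental_theorem_of_calculus_interior_strong[OF S(1) t0(3) der cV])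
  have q2: "((\<lambda>s. (-2*\<kappa>) * qf (\<phi> s) (x s)) has_integral ((-2*\<kappa>) * integral {a..b} (\<lambda>s. qf (\<phi> s) (x s)))) {a..b}"
    by (rule has_integral_mult_right[OF integrable_integral[OF qi]])
  have "Vf (x b) - Vf (x a) \<le> (-2*\<kappa>) * integral {a..b} (\<lambda>s. qf (\<phi> s) (x s))"
    by (rule has_integral_le[OF FTC q2]) (use Vd_le in simp)
  then show "Vf (x b) + 2*\<kappa>*integral {a..b} (\<lambda>s. qf (\<phi> s) (x s)) \<le> Vf (x a)" by simp
qed

lemma V_mono:
  assumes sol: "is_solution F t0 x" and t0: "0 \<le> t0" "t0 \<le> a" "a \<le> b"
  shows "Vf (x b) \<le> Vf (x a)"
proof -
  have "0 \<le> integral {a..b} (\<lambda>s. qf (\<phi> s) (x s))"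
    by (rule integral_nonneg[OF V_decr(1)[OF assms]]) (rule qf_nonneg)
  then show ?thesis using V_decr(2)[OF assms] \<kappa>pos by (smt (verit) mult_nonneg_nonneg)
qed

lemma pe_quad:
  assumes t: "t \<ge> 0"
  shows "(\<lambda>s. (\<phi> s \<bullet> v)^2) integrable_on {t..t+T}"
    and "\<delta> * (v \<bullet> v) \<le> integral {t..t+T} (\<lambda>s. (\<phi> s \<bullet> v)^2)"
proof -
  let ?O = "\<lambda>s. outer (\<phi> s) (\<phi> s)"
  have oi: "?O integrable_on {t..t+T}"
  proof (rule ccontr)
    assume "\<not> ?O integrable_on {t..t+T}"
    then have "integral {t..t+T} ?O = 0" by (rule not_integrable_integral)
    with pe[OF t] have "mat_ge (0::real^'n^'n) (\<delta> *\<^sub>R mat 1)" by simp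
    moreover have eqm: "(0::real^'n^'n) - \<delta> *\<^sub>R mat 1 = (-\<delta>) *\<^sub>R mat 1" by simp
    ultimately have "(axis i 1 :: real^'n) \<bullet> (((-\<delta>) *\<^sub>R mat 1) *v axis i 1) \<ge> 0" for i
      unfolding mat_ge_def by metis
    then have "(axis i 1 :: real^'n) \<bullet> ((-\<delta>) *\<^sub>R axis i 1) \<ge> 0" for i
      by (metis scaleR_matrix_vector_assoc matrix_vector_mul_lid)
    then show False using \<delta>pos by simp
  qed
  define L where "L = (\<lambda>A::real^'n^'n. v \<bullet> (A *v v))"
  have "linear L" unfolding L_def linear_iff
    by (simp add: matrix_vector_mult_add_rdistrib inner_add_right scaleR_matrix_vector_assoc[symmetric])
  then have bl: "bounded_linear L" by (simp add: linear_conv_bounded_linear)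
  have Lo: "(L \<circ> ?O) = (\<lambda>s. (\<phi> s \<bullet> v)^2)"
    by (simp add: L_def o_def outer_mult fun_eq_iff inner_commute power2_eq_square)
  show "(\<lambda>s. (\<phi> s \<bullet> v)^2) integrable_on {t..t+T}" using integrable_linear[OF oi bl] Lo by simp
  have I: "integral {t..t+T} (\<lambda>s. (\<phi> s \<bullet> v)^2) = L (integral {t..t+T} ?O)"
    using integral_linear[OF oi bl] Lo by simp
  have "v \<bullet> ((integral {t..t+T} ?O - \<delta> *\<^sub>R mat 1) *v v) \<ge> 0" using pe[OF t] by (simp add: mat_ge_def)
  then show "\<delta> * (v \<bullet> v) \<le> integral {t..t+T} (\<lambda>s. (\<phi> s \<bullet> v)^2)"
    by (simp add: I L_def matrix_vector_mult_diff_rdistrib inner_diff_right scaleR_matrix_vector_assoc[symmetric])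
qed

lemma sq_add: "((a::real) + b)^2 \<le> 2*a^2 + 2*b^2"
proof -
  have "2*a^2 + 2*b^2 - (a+b)^2 = (a-b)^2" by (simp add: power2_eq_square algebra_simps)
  moreover have "(a-b)^2 \<ge> 0" by simp
  ultimately show ?thesis by linarith
qed

lemma norm_sq_add: "(norm (x + y))^2 \<le> 2*(norm x)^2 + 2*(norm y)^2"
proof -
  have "(norm (x + y))^2 \<le> (norm x + norm y)^2" by (rule power_mono[OF norm_triangle_ineq]) simp
  also have "\<dots> \<le> 2*(norm x)^2 + 2*(norm y)^2" by (rule sq_add)
  finally show ?thesis .
qed

definition Cz :: real where "Cz = 2*\<gamma>^2*M^2*(1+M^2)"
definition Cw :: real where "Cw = 2*\<beta>^2*(1+\<mu>*M^2)^2 + 2*Cz"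

lemma Cz_nonneg: "Cz \<ge> 0" by (simp add: Cz_def)
lemma Cw_nonneg: "Cw \<ge> 0" using Cz_nonneg by (simp add: Cw_def)

lemma inner_sq_le: "(u \<bullet> w)^2 \<le> (norm u)^2 * (w \<bullet> w)"
proof -
  have "\<bar>u \<bullet> w\<bar> \<le> norm u * norm w" by (rule Cauchy_Schwarz_ineq2)
  then have "\<bar>u \<bullet> w\<bar>^2 \<le> (norm u * norm w)^2" by (rule power_mono) simp
  then show ?thesis by (simp add: power_mult_distrib power2_norm_eq_inner)
qed

lemma Gz_bound:
  assumes u: "norm u \<le> M"
  shows "(norm (snd (G u p)))^2 \<le> Cz * qf u p"
proof -
  define A where "A = u \<bullet> (snd p - \<theta>s)"
  define B where "B = u \<bullet> (fst p - snd p)"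
  define W where "W = (fst p - snd p) \<bullet> (fst p - snd p)"
  have W0: "W \<ge> 0" by (simp add: W_def)
  have ue: "u \<bullet> (fst p - \<theta>s) = A + B" unfolding A_def B_def
    by (simp add: inner_diff_right)
  have nu: "(norm u)^2 \<le> M^2" using u by (intro power_mono) auto
  have "B^2 \<le> (norm u)^2 * W" unfolding B_def W_def by (rule inner_sq_le)
  also have "\<dots> \<le> M^2 * W" using nu W0 by (rule mult_right_mono)
  finally have B2: "B^2 \<le> M^2 * W" .
  have "(A+B)^2 \<le> 2*A^2 + 2*B^2" by (rule sq_add)
  moreover have "2*(1+M^2)*(A^2+W) = 2*A^2 + 2*(M^2*A^2) + 2*W + 2*(M^2*W)" by (simp add: algebra_simps)
  moreover have "M^2*A^2 \<ge> 0" by simp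
  ultimately have AB: "(A+B)^2 \<le> 2*(1+M^2)*(A^2+W)" using B2 W0 by linarith
  have "(norm (snd (G u p)))^2 = \<gamma>^2 * (A+B)^2 * (norm u)^2"
    by (simp add: G_def ue power_mult_distrib)
  also have "\<dots> \<le> \<gamma>^2 * (A+B)^2 * M^2" using nu by (intro mult_left_mono) auto
  also have "\<dots> \<le> \<gamma>^2 * (2*(1+M^2)*(A^2+W)) * M^2"
    using AB by (intro mult_right_mono mult_left_mono) auto
  also have "\<dots> = Cz * qf u p" by (simp add: Cz_def qf_def A_def W_def algebra_simps)
  finally show ?thesis .
qed

lemma Gw_bound:
  assumes u: "norm u \<le> M"
  shows "(norm (fst (G u p) - snd (G u p)))^2 \<le> Cw * qf u p"
proof -
  define w where "w = fst p - snd p"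
  define N where "N = 1+\<mu>*(u\<bullet>u)"
  define W where "W = w \<bullet> w"
  have W0: "W \<ge> 0" by (simp add: W_def)
  have Wq: "W \<le> qf u p" by (simp add: W_def w_def qf_def)
  have e: "fst (G u p) - snd (G u p) = (-(\<beta>*N)) *\<^sub>R w - snd (G u p)"
    by (simp add: G_def w_def N_def)
  have "(norm (fst (G u p) - snd (G u p)))^2 \<le> 2*(norm ((-(\<beta>*N)) *\<^sub>R w))^2 + 2*(norm (snd (G u p)))^2"
    using norm_sq_add[of "(-(\<beta>*N)) *\<^sub>R w" "- snd (G u p)"] by (simp add: e)
  moreover have "(norm ((-(\<beta>*N)) *\<^sub>R w))^2 = (\<beta>*N)^2 * W"
    by (simp add: power_mult_distrib W_def power2_norm_eq_inner)
  moreover have "(\<beta>*N)^2 \<le> (\<beta>*(1+\<mu>*M^2))^2"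
  proof (rule power_mono)
    have "u \<bullet> u \<le> M^2" using u by (simp add: power2_norm_eq_inner[symmetric] power_mono)
    then show "\<beta>*N \<le> \<beta>*(1+\<mu>*M^2)" using \<beta>pos \<mu>pos by (simp add: N_def)
    show "0 \<le> \<beta>*N" using \<beta>pos \<mu>pos by (simp add: N_def)
  qed
  moreover have "(\<beta>*(1+\<mu>*M^2))^2 * W \<le> (\<beta>*(1+\<mu>*M^2))^2 * qf u p" using Wq by (simp add: mult_left_mono)
  moreover have "(\<beta>*N)^2 * W \<le> (\<beta>*(1+\<mu>*M^2))^2 * W" using calculation(3) W0 by (rule mult_right_mono)
  moreover note Gz_bound[OF u, of p]
  ultimately have "(norm (fst (G u p) - snd (G u p)))^2 \<le> 2*((\<beta>*(1+\<mu>*M^2))^2 * qf u p) + 2*(Cz * qf u p)"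
    by linarith
  also have "\<dots> = Cw * qf u p" unfolding Cw_def power_mult_distrib by (simp add: algebra_simps)
  finally show ?thesis .
qed


definition C3 :: real where
  "C3 = ((2 + 2*M^2*T^2*Cz)/\<delta> + (2 + 2*T^2*Cw)/T)/\<gamma>"

lemma C3_pos: "C3 > 0"
proof -
  have "2 + 2*M^2*T^2*Cz > 0" using Cz_nonneg by (simp add: add_pos_nonneg)
  moreover have "2 + 2*T^2*Cw > 0" using Cw_nonneg by (simp add: add_pos_nonneg)
  ultimately have "(2 + 2*M^2*T^2*Cz)/\<delta> > 0" "(2 + 2*T^2*Cw)/T > 0"
    using \<delta>pos Tpos by auto
  then show ?thesis unfolding C3_def using \<gamma>pos by simp
qed

lemma pe_step:
  assumes sol: "is_solution F t0 x" and t0: "0 \<le> t0" "t0 \<le> t"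
  shows "Vf (x t) \<le> C3 * integral {t..t+T} (\<lambda>s. qf (\<phi> s) (x s))"
proof -
  let ?q = "\<lambda>s. qf (\<phi> s) (x s)"
  let ?g = "\<lambda>s. G (\<phi> s) (x s)"
  define Q where "Q = integral {t..t+T} ?q"
  have solt: "is_solution F t x" by (rule sol_shift[OF sol t0(2)])
  have hint: "(?g has_integral (x s - x t)) {t..s}" if "s \<in> {t..t+T}" for s
    using solt that unfolding is_solution_def F_def by auto
  have tT: "t \<le> t + T" using Tpos by simp
  obtain S where S: "finite S" "continuous_on ({0..t+T} - S) \<phi>"
    using pc_at[of "t+T"] t0 Tpos by auto
  have cx: "continuous_on {t..t+T} x" using sol_cont[OF solt tT] .
  have cphi: "continuous_on ({t..t+T} - S) \<phi>" by (rule continuous_on_subset[OF S(2)]) (use t0 in auto)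
  have bphi: "\<And>s. s \<in> {t..t+T} \<Longrightarrow> norm (\<phi> s) \<le> M" using Mbound t0 by auto
  have qi: "?q integrable_on {t..t+T}" using V_decr(1)[OF sol t0 tT] .
  have q0: "\<And>r. 0 \<le> ?q r" by (rule qf_nonneg)
  have Q0: "Q \<ge> 0" unfolding Q_def by (rule integral_nonneg[OF qi]) (rule qf_nonneg)
  note PI = pc_integrable2[OF S(1) cphi bphi cx]
  have incz: "(norm (snd (x s) - snd (x t)))^2 \<le> T * Cz * Q" if s: "s \<in> {t..t+T}" for s
  proof -
    have "(norm ((\<lambda>r. snd (x r)) s - (\<lambda>r. snd (x r)) t))^2 \<le> T * Cz * integral {t..t+T} ?q"
    proof (rule incr_bound[where h="\<lambda>r. snd (?g r)"])
      fix s assume "s \<in> {t..t+T}"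
      from has_integral_linear[OF hint[OF this] bounded_linear_snd]
      show "((\<lambda>r. snd (?g r)) has_integral (snd (x s) - snd (x t))) {t..s}" by (simp add: o_def)
    next
      have cc: "continuous_on UNIV (\<lambda>y. norm (snd (G (fst y) (snd y))))" unfolding G_def by (intro continuous_intros)
      have "(\<lambda>s. (\<lambda>u p. norm (snd (G u p))) (\<phi> s) (x s)) integrable_on {t..t+T}"
        by (rule PI[where H="\<lambda>u p. norm (snd (G u p))"]) (simp_all add: cc)
      then show "(\<lambda>r. norm (snd (?g r))) integrable_on {t..t+T}" by simp
      have cc: "continuous_on UNIV (\<lambda>y. (norm (snd (G (fst y) (snd y))))^2)" unfolding G_def by (intro continuous_intros)
      have "(\<lambda>s. (\<lambda>u p. (norm (snd (G u p)))^2) (\<phi> s) (x s)) integrable_on {t..t+T}"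
        by (rule PI[where H="\<lambda>u p. (norm (snd (G u p)))^2"]) (simp_all add: cc)
      then show "(\<lambda>r. (norm (snd (?g r)))^2) integrable_on {t..t+T}" by simp
      show "?q integrable_on {t..t+T}" by (rule qi)
      fix r assume "r \<in> {t..t+T}"
      then show "(norm (snd (?g r)))^2 \<le> Cz * ?q r" using Gz_bound bphi by blast
    qed (use q0 Tpos Cz_nonneg s in auto)
    then show ?thesis by (simp add: Q_def)
  qed
  have incw: "(norm ((fst (x s) - snd (x s)) - (fst (x t) - snd (x t))))^2 \<le> T * Cw * Q"
    if s: "s \<in> {t..t+T}" for s
  proof -
    have "(norm ((\<lambda>r. fst (x r) - snd (x r)) s - (\<lambda>r. fst (x r) - snd (x r)) t))^2 \<le> T * Cw * integral {t..t+T} ?q"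
    proof (rule incr_bound[where h="\<lambda>r. fst (?g r) - snd (?g r)"])
      fix s assume "s \<in> {t..t+T}"
      from has_integral_linear[OF hint[OF this] bounded_linear_sub[OF bounded_linear_fst bounded_linear_snd]]
      show "((\<lambda>r. fst (?g r) - snd (?g r)) has_integral ((fst (x s) - snd (x s)) - (fst (x t) - snd (x t)))) {t..s}"
        by (simp add: o_def algebra_simps)
    next
      have cc: "continuous_on UNIV (\<lambda>y. norm (fst (G (fst y) (snd y)) - snd (G (fst y) (snd y))))" unfolding G_def by (intro continuous_intros)
      have "(\<lambda>s. (\<lambda>u p. norm (fst (G u p) - snd (G u p))) (\<phi> s) (x s)) integrable_on {t..t+T}"
        by (rule PI[where H="\<lambda>u p. norm (fst (G u p) - snd (G u p))"]) (simp_all add: cc)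
      then show "(\<lambda>r. norm (fst (?g r) - snd (?g r))) integrable_on {t..t+T}" by simp
      have cc: "continuous_on UNIV (\<lambda>y. (norm (fst (G (fst y) (snd y)) - snd (G (fst y) (snd y))))^2)" unfolding G_def by (intro continuous_intros)
      have "(\<lambda>s. (\<lambda>u p. (norm (fst (G u p) - snd (G u p)))^2) (\<phi> s) (x s)) integrable_on {t..t+T}"
        by (rule PI[where H="\<lambda>u p. (norm (fst (G u p) - snd (G u p)))^2"]) (simp_all add: cc)
      then show "(\<lambda>r. (norm (fst (?g r) - snd (?g r)))^2) integrable_on {t..t+T}" by simp
      show "?q integrable_on {t..t+T}" by (rule qi)
      fix r assume "r \<in> {t..t+T}"
      then show "(norm (fst (?g r) - snd (?g r)))^2 \<le> Cw * ?q r" using Gw_bound bphi by blast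
    qed (use q0 Tpos Cw_nonneg s in auto)
    then show ?thesis by (simp add: Q_def)
  qed
  have intc: "integral {t..t+T} (\<lambda>s. 2 * ?q s + c) = 2 * Q + T * c" for c
  proof -
    have "integral {t..t+T} (\<lambda>s. 2 * ?q s + c) = integral {t..t+T} (\<lambda>s. 2 * ?q s) + integral {t..t+T} (\<lambda>s. c)"
      by (rule integral_add[OF integrable_on_mult_right[OF qi] integrable_const_ivl])
    then show ?thesis using tT by (simp add: Q_def content_real)
  qed
  have inti: "(\<lambda>s. 2 * ?q s + c) integrable_on {t..t+T}" for c
    by (rule integrable_add[OF integrable_on_mult_right[OF qi] integrable_const_ivl])
  define v where "v = snd (x t) - \<theta>s"
  have zpt: "(\<phi> s \<bullet> v)^2 \<le> 2 * ?q s + 2*M^2*(T*Cz*Q)" if s: "s \<in> {t..t+T}" for s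
  proof -
    define d where "d = snd (x s) - snd (x t)"
    have "v = (snd (x s) - \<theta>s) - d" by (simp add: v_def d_def)
    then have "(\<phi> s \<bullet> v)^2 = (\<phi> s \<bullet> (snd (x s) - \<theta>s) + (- (\<phi> s \<bullet> d)))^2"
      by (simp add: inner_diff_right)
    also have "\<dots> \<le> 2*(\<phi> s \<bullet> (snd (x s) - \<theta>s))^2 + 2*(- (\<phi> s \<bullet> d))^2" by (rule sq_add)
    also have "(\<phi> s \<bullet> (snd (x s) - \<theta>s))^2 \<le> ?q s" by (simp add: qf_def)
    also have "(- (\<phi> s \<bullet> d))^2 \<le> M^2*(T*Cz*Q)"
    proof -
      have "(- (\<phi> s \<bullet> d))^2 \<le> (norm (\<phi> s))^2 * (d \<bullet> d)" using inner_sq_le[of "\<phi> s" d] by simp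
      also have "\<dots> \<le> M^2 * (d \<bullet> d)"
        using bphi[OF s] by (intro mult_right_mono power_mono) auto
      also have "\<dots> \<le> M^2 * (T*Cz*Q)"
        using incz[OF s] by (intro mult_left_mono) (auto simp: d_def power2_norm_eq_inner)
      finally show ?thesis .
    qed
    finally show ?thesis by simp
  qed
  have "\<delta> * (v \<bullet> v) \<le> integral {t..t+T} (\<lambda>s. (\<phi> s \<bullet> v)^2)" using pe_quad(2)[of t v] t0 by simp
  also have "\<dots> \<le> integral {t..t+T} (\<lambda>s. 2 * ?q s + 2*M^2*(T*Cz*Q))"
    by (rule integral_le[OF pe_quad(1) inti]) (use t0 zpt in auto)
  also have "\<dots> = (2 + 2*M^2*T^2*Cz) * Q" by (subst intc) (simp add: algebra_simps power2_eq_square)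
  finally have vz: "v \<bullet> v \<le> (2 + 2*M^2*T^2*Cz) / \<delta> * Q"
    using \<delta>pos by (simp add: pos_le_divide_eq mult.commute)
  define vw where "vw = fst (x t) - snd (x t)"
  have wpt: "vw \<bullet> vw \<le> 2 * ?q s + 2*(T*Cw*Q)" if s: "s \<in> {t..t+T}" for s
  proof -
    define ws where "ws = fst (x s) - snd (x s)"
    have "vw = ws + (- (ws - vw))" by simp
    then have "vw \<bullet> vw = (norm (ws + (- (ws - vw))))^2" by (simp add: power2_norm_eq_inner)
    also have "\<dots> \<le> 2*(norm ws)^2 + 2*(norm (- (ws - vw)))^2" by (rule norm_sq_add)
    also have "(norm ws)^2 \<le> ?q s" by (simp add: qf_def ws_def power2_norm_eq_inner)
    also have "(norm (- (ws - vw)))^2 \<le> T*Cw*Q" using incw[OF s] by (simp add: ws_def vw_def norm_minus_commute)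
    finally show ?thesis by simp
  qed
  have "T * (vw \<bullet> vw) = integral {t..t+T} (\<lambda>s. vw \<bullet> vw)" using tT by (simp add: content_real)
  also have "\<dots> \<le> integral {t..t+T} (\<lambda>s. 2 * ?q s + 2*(T*Cw*Q))"
    by (rule integral_le[OF integrable_const_ivl inti]) (use wpt in auto)
  also have "\<dots> = (2 + 2*T^2*Cw) * Q" by (subst intc) (simp add: algebra_simps power2_eq_square)
  finally have vw2: "vw \<bullet> vw \<le> (2 + 2*T^2*Cw) / T * Q"
    using Tpos by (simp add: pos_le_divide_eq mult.commute)
  have "Vf (x t) = (v \<bullet> v + vw \<bullet> vw) / \<gamma>" by (simp add: Vf_def v_def vw_def)
  also have "\<dots> \<le> ((2 + 2*M^2*T^2*Cz) / \<delta> * Q + (2 + 2*T^2*Cw) / T * Q) / \<gamma>"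
    using vz vw2 \<gamma>pos by (intro divide_right_mono) auto
  also have "\<dots> = C3 * Q" by (simp add: C3_def algebra_simps add_divide_distrib)
  finally show ?thesis by (simp add: Q_def)
qed


definition \<rho> :: real where "\<rho> = 1 - min (2*\<kappa>/C3) (1/2)"

lemma \<rho>_bounds: "1/2 \<le> \<rho>" "\<rho> < 1"
  using \<kappa>pos C3_pos by (auto simp: \<rho>_def)

lemma contract:
  assumes sol: "is_solution F t0 x" and t0: "0 \<le> t0" "t0 \<le> t"
  shows "Vf (x (t+T)) \<le> \<rho> * Vf (x t)"
proof -
  define Q where "Q = integral {t..t+T} (\<lambda>s. qf (\<phi> s) (x s))"
  have tT: "t \<le> t + T" using Tpos by simp
  have d: "Vf (x (t+T)) + 2*\<kappa>*Q \<le> Vf (x t)"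
    using V_decr(2)[OF sol t0(1) t0(2) tT] by (simp add: Q_def)
  have p: "Vf (x t) \<le> C3 * Q" using pe_step[OF sol t0] by (simp add: Q_def)
  have c0: "0 \<le> 2*\<kappa>/C3" using \<kappa>pos C3_pos by simp
  have "(2*\<kappa>/C3) * Vf (x t) \<le> (2*\<kappa>/C3) * (C3 * Q)" using p c0 by (rule mult_left_mono)
  also have "\<dots> = 2*\<kappa>*Q" using C3_pos by simp
  finally have a: "(2*\<kappa>/C3) * Vf (x t) \<le> 2*\<kappa>*Q" .
  have b: "min (2*\<kappa>/C3) (1/2) * Vf (x t) \<le> (2*\<kappa>/C3) * Vf (x t)"
    using Vf_nonneg by (intro mult_right_mono) auto
  have "\<rho> * Vf (x t) = Vf (x t) - min (2*\<kappa>/C3) (1/2) * Vf (x t)" by (simp add: \<rho>_def algebra_simps)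
  then show ?thesis using a b d by linarith
qed

lemma iter:
  assumes sol: "is_solution F t0 x" and t0: "0 \<le> t0"
  shows "Vf (x (t0 + real k * T)) \<le> \<rho>^k * Vf (x t0)"
proof (induction k)
  case 0 then show ?case by simp
next
  case (Suc k)
  have e: "t0 + real (Suc k) * T = (t0 + real k * T) + T" by (simp add: algebra_simps)
  have "Vf (x (t0 + real (Suc k) * T)) \<le> \<rho> * Vf (x (t0 + real k * T))"
    unfolding e by (rule contract[OF sol t0]) (use Tpos in simp)
  also have "\<dots> \<le> \<rho> * (\<rho>^k * Vf (x t0))" using Suc \<rho>_bounds by (intro mult_left_mono) auto
  finally show ?case by simp
qed

definition lam :: real where "lam = - ln \<rho> / T"

lemma lampos: "lam > 0"
proof -
  have "ln \<rho> < 0" using \<rho>_bounds by simp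
  then have "ln \<rho> / T < 0" using Tpos by (rule divide_neg_pos)
  then show ?thesis by (simp add: lam_def)
qed

lemma decay:
  assumes sol: "is_solution F t0 x" and t0: "0 \<le> t0" "t0 \<le> t"
  shows "Vf (x t) \<le> (1/\<rho>) * exp (- lam * (t - t0)) * Vf (x t0)"
proof -
  have \<rho>0: "\<rho> > 0" using \<rho>_bounds by simp
  define k where "k = nat \<lfloor>(t - t0)/T\<rfloor>"
  have nn: "0 \<le> (t - t0)/T" using t0 Tpos by simp
  have k1: "real k \<le> (t - t0)/T" using nn by (simp add: k_def)
  have k2: "(t - t0)/T - 1 \<le> real k" using nn by (simp add: k_def)
  have "real k * T \<le> t - t0" using k1 Tpos by (simp add: pos_le_divide_eq)
  then have le: "t0 + real k * T \<le> t" by simp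
  have "Vf (x t) \<le> Vf (x (t0 + real k * T))"
    by (rule V_mono[OF sol t0(1) _ le]) (use Tpos in simp)
  also have "\<dots> \<le> \<rho>^k * Vf (x t0)" by (rule iter[OF sol t0(1)])
  also have "\<rho>^k \<le> (1/\<rho>) * exp (- lam * (t - t0))"
  proof -
    have "\<rho>^k = exp (real k * ln \<rho>)" using \<rho>0 by (simp add: exp_of_nat_mult)
    also have "real k * ln \<rho> \<le> ((t - t0)/T - 1) * ln \<rho>"
      using k2 \<rho>_bounds by (intro mult_right_mono_neg) auto
    then have "exp (real k * ln \<rho>) \<le> exp (((t - t0)/T - 1) * ln \<rho>)" by simp
    also have "((t - t0)/T - 1) * ln \<rho> = - lam * (t - t0) - ln \<rho>"
      using Tpos by (simp add: lam_def field_simps)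
    also have "exp (- lam * (t - t0) - ln \<rho>) = (1/\<rho>) * exp (- lam * (t - t0))"
      using \<rho>0 by (simp add: exp_diff)
    finally show ?thesis .
  qed
  then have "\<rho>^k * Vf (x t0) \<le> (1/\<rho>) * exp (- lam * (t - t0)) * Vf (x t0)"
    using Vf_nonneg by (rule mult_right_mono)
  finally show ?thesis .
qed

lemma norm_V:
  fixes p :: "(real^'n) \<times> (real^'n)"
  shows "(norm (p - (\<theta>s, \<theta>s)))^2 \<le> 3 * \<gamma> * Vf p" and "\<gamma> * Vf p \<le> 3 * (norm (p - (\<theta>s, \<theta>s)))^2"
proof -
  define e where "e = fst p - \<theta>s"
  define z where "z = snd p - \<theta>s"
  have n: "(norm (p - (\<theta>s, \<theta>s)))^2 = (norm e)^2 + (norm z)^2"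
    by (cases p) (simp add: norm_Pair e_def z_def)
  have gV: "\<gamma> * Vf p = (norm z)^2 + (norm (e - z))^2"
    using \<gamma>pos by (simp add: Vf_def e_def z_def power2_norm_eq_inner)
  have a: "(norm (e - z))^2 \<le> 2*(norm e)^2 + 2*(norm z)^2"
    using norm_sq_add[of e "-z"] by simp
  have b: "(norm e)^2 \<le> 2*(norm (e - z))^2 + 2*(norm z)^2"
    using norm_sq_add[of "e - z" z] by simp
  have "(norm (p - (\<theta>s, \<theta>s)))^2 \<le> 3 * ((norm z)^2 + (norm (e - z))^2)" using n b zero_le_power2[of "norm (e - z)"] by (smt (verit))
  also have "\<dots> = 3 * \<gamma> * Vf p" using gV by (simp add: mult.assoc)
  finally show "(norm (p - (\<theta>s, \<theta>s)))^2 \<le> 3 * \<gamma> * Vf p" .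
  show "\<gamma> * Vf p \<le> 3 * (norm (p - (\<theta>s, \<theta>s)))^2" using n gV a zero_le_power2[of "norm e"] by (smt (verit))
qed

lemma final_bound:
  assumes sol: "is_solution F t0 x" and t0: "0 \<le> t0" "t0 \<le> t"
  shows "norm (x t - (\<theta>s, \<theta>s)) \<le> (3 / sqrt \<rho>) * norm (x t0 - (\<theta>s, \<theta>s)) * exp (- (lam/2) * (t - t0))"
proof -
  have \<rho>0: "\<rho> > 0" using \<rho>_bounds by simp
  define E where "E = exp (- lam * (t - t0))"
  define n0 where "n0 = norm (x t0 - (\<theta>s, \<theta>s))"
  have E0: "E \<ge> 0" by (simp add: E_def)
  have "(norm (x t - (\<theta>s, \<theta>s)))^2 \<le> 3 * \<gamma> * Vf (x t)" by (rule norm_V(1))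
  also have "\<dots> \<le> 3 * \<gamma> * ((1/\<rho>) * E * Vf (x t0))"
  proof -
    have dd: "Vf (x t) \<le> (1/\<rho>) * E * Vf (x t0)" using decay[OF sol t0] unfolding E_def .
    show ?thesis by (rule mult_left_mono[OF dd]) (use \<gamma>pos in simp)
  qed
  also have "\<dots> = 3 * (1/\<rho>) * E * (\<gamma> * Vf (x t0))" by (simp add: algebra_simps)
  also have "\<dots> \<le> 3 * (1/\<rho>) * E * (3 * n0^2)"
    using norm_V(2)[of "x t0"] \<rho>0 E0 by (intro mult_left_mono) (auto simp: n0_def)
  also have "\<dots> = ((3 / sqrt \<rho>) * n0 * exp (- (lam/2) * (t - t0)))^2"
  proof -
    have "(exp (- (lam/2) * (t - t0)))^2 = E"
      by (simp add: E_def power2_eq_square exp_add[symmetric])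
    moreover have "(sqrt \<rho>)^2 = \<rho>" using \<rho>0 by simp
    ultimately show ?thesis by (simp add: power_mult_distrib power_divide)
  qed
  finally have "(norm (x t - (\<theta>s, \<theta>s)))^2 \<le> ((3 / sqrt \<rho>) * n0 * exp (- (lam/2) * (t - t0)))^2" .
  then show ?thesis unfolding n0_def
    by (rule power2_le_imp_le) (use \<rho>0 in simp)
qed

end

lemma KL_exp:
  fixes K l :: real
  assumes K: "K > 0" and l: "l > 0"
  shows "class_KL (\<lambda>r s. K * r * exp (- l * s))"
  unfolding class_KL_def class_K_def
proof (intro conjI allI impI)
  have "(\<lambda>(r, s). K * r * exp (- l * s)) = (\<lambda>y. K * fst y * exp (- l * snd y))" by (auto simp: fun_eq_iff)
  moreover have "continuous_on ({0..} \<times> {0..}) (\<lambda>y::real\<times>real. K * fst y * exp (- l * snd y))"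
    by (intro continuous_intros)
  ultimately show "continuous_on ({0..} \<times> {0..}) (\<lambda>(r, s). K * r * exp (- l * s))" by simp
  fix s :: real
  show "continuous_on {0..} (\<lambda>r. K * r * exp (- l * s))" by (intro continuous_intros)
  show "K * 0 * exp (- l * s) = 0" by simp
  show "strict_mono_on {0..} (\<lambda>r. K * r * exp (- l * s))"
    unfolding strict_mono_on_def using K by (auto intro!: mult_strict_right_mono)
next
  fix r :: real assume r: "0 \<le> r"
  show "antimono_on {0..} (\<lambda>s. K * r * exp (- l * s))"
    unfolding monotone_on_def using K r l by (auto intro!: mult_left_mono)
  have "LIM s at_top. (- l) * s :> at_bot"
    by (rule filterlim_tendsto_neg_mult_at_bot[OF tendsto_const]) (use l in \<open>auto intro: filterlim_ident\<close>)
  then have "((\<lambda>s. exp ((- l) * s)) \<longlongrightarrow> 0) at_top" by (rule filterlim_compose[OF exp_at_bot])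
  then have "((\<lambda>s. K * r * exp ((- l) * s)) \<longlongrightarrow> K * r * 0) at_top" by (intro tendsto_intros)
  then show "((\<lambda>s. K * r * exp (- l * s)) \<longlongrightarrow> 0) at_top" by simp
qed

theorem theorem1:
  fixes \<phi> :: "real \<Rightarrow> real^'n" and \<theta>s :: "real^'n" and \<beta> \<gamma> \<mu> :: real
  assumes "piecewise_continuous_nonneg \<phi>"
    and "persistently_exciting \<phi>"
    and "\<beta> > 0" "\<gamma> > 0" "\<mu> > 0" "\<beta> \<ge> 2 * \<gamma> / \<mu>"
  shows "UGAS (\<lambda>t (\<theta>, \<theta>2).
            (- (\<beta> * (1 + \<mu> * (\<phi> t \<bullet> \<phi> t))) *\<^sub>R (\<theta> - \<theta>2),
             - \<gamma> *\<^sub>R (outer (\<phi> t) (\<phi> t) *v (\<theta> - \<theta>s))))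
          (\<theta>s, \<theta>s)"
proof -
  from assms(2) obtain M T \<delta> where M: "M > 0" "T > 0" "\<delta> > 0" "\<forall>t\<ge>0. norm (\<phi> t) \<le> M"
    "\<forall>t\<ge>0. mat_ge (integral {t..t+T} (\<lambda>s. outer (\<phi> s) (\<phi> s))) (\<delta> *\<^sub>R mat 1)"
    unfolding persistently_exciting_def by blast
  interpret S: sys \<phi> \<theta>s \<beta> \<gamma> \<mu> M T \<delta>
    by unfold_locales (use assms M in auto)
  have f_eq: "(\<lambda>t (\<theta>, \<theta>2).
            (- (\<beta> * (1 + \<mu> * (\<phi> t \<bullet> \<phi> t))) *\<^sub>R (\<theta> - \<theta>2),
             - \<gamma> *\<^sub>R (outer (\<phi> t) (\<phi> t) *v (\<theta> - \<theta>s)))) = S.F"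
    by (intro ext) (auto simp: S.F_def S.G_def outer_mult split_beta)
  have K: "3 / sqrt S.\<rho> > 0" using S.\<rho>_bounds by simp
  have l: "S.lam / 2 > 0" using S.lampos by simp
  show ?thesis unfolding UGAS_def f_eq
  proof (intro exI[of _ "\<lambda>r s. (3 / sqrt S.\<rho>) * r * exp (- (S.lam/2) * s)"] conjI allI impI)
    show "class_KL (\<lambda>r s. (3 / sqrt S.\<rho>) * r * exp (- (S.lam/2) * s))" by (rule KL_exp[OF K l])
    fix t0 x t assume "0 \<le> t0" "is_solution S.F t0 x" "t0 \<le> t"
    then show "norm (x t - (\<theta>s, \<theta>s)) \<le> (3 / sqrt S.\<rho>) * norm (x t0 - (\<theta>s, \<theta>s)) * exp (- (S.lam/2) * (t - t0))"
      using S.final_bound by blast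
  qed
qed

end
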